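(* Let $D \subset \mathbb{Z}^m \setminus \{\mathbf{0}\}$ be finite with $D = -D$, and let $F_D$ be the set of Laurent polynomials $f(z) = \sum_{d \in D} c_d z_1^{d_1}\cdots z_m^{d_m}$ with $c_{-d} = \overline{c_d}$ for all $d \in D$ and $\sum_{d \in D} |c_d|^2 = 1$, topologized via the coefficient vector $(c_d)_{d \in D}$. Then the function $f \mapsto \rho_-(f)$ is continuous on $F_D$.
   Context: $\lambda_m$ is the normalized Lebesgue measure on $\mathbb{T}^m$ ($\mathbb{T}$ the unit circle), with $\lambda_m(\mathbb{T}^m)=1$; such $f$ are real-valued on $\mathbb{T}^m$, and $\rho_-(f) = \lambda_m(\{z \in \mathbb{T}^m : f(z) < 0\})$. *)

theory Defs
  imports "HOL-Analysis.Analysis"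
begin

definition laurent_eval :: "(int^'m) set \<Rightarrow> (int^'m \<Rightarrow> complex) \<Rightarrow> complex^'m \<Rightarrow> complex" where
  "laurent_eval D c z = (\<Sum>d\<in>D. c d * (\<Prod>j\<in>UNIV. (z$j) powi (d$j)))"

definition torus_measure :: "(complex^'m) measure" where
  "torus_measure = distr (restrict_space lborel {t::real^'m. \<forall>j. t$j \<in> {0..1}})
       borel (\<lambda>t. \<chi> j. cis (2 * pi * t$j))"

text \<open>The set F_D of admissible coefficient vectors (coefficients outside D are 0,
  so the product topology on functions restricts to the topology of C^D).\<close>
definition F_D :: "(int^'m) set \<Rightarrow> (int^'m \<Rightarrow> complex) set" where
  "F_D D = {c. (\<forall>d. d \<notin> D \<longrightarrow> c d = 0) \<and> (\<forall>d\<in>D. c (- d) = cnj (c d))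
              \<and> (\<Sum>d\<in>D. (cmod (c d))^2) = 1}"

definition rho_neg :: "(int^'m) set \<Rightarrow> (int^'m \<Rightarrow> complex) \<Rightarrow> real" where
  "rho_neg D c = measure torus_measure
     {z \<in> space torus_measure. Re (laurent_eval D c z) < 0}"

end

theory Submission imports Defs "HOL-Computational_Algebra.Polynomial" begin

lemma exp_poly_roots_finite:
  fixes a :: "'a \<Rightarrow> complex" and n :: "'a \<Rightarrow> int"
  assumes fin: "finite D" and inj: "inj_on n D" and d0: "d0 \<in> D" "a d0 \<noteq> 0"
  shows "finite {w. w \<noteq> 0 \<and> (\<Sum>d\<in>D. a d * w powi n d) = 0}"
proof -
  define N where "N = (\<Sum>d\<in>D. \<bar>n d\<bar>)"
  have Nge: "\<bar>n d\<bar> \<le> N" if "d \<in> D" for d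
    unfolding N_def using fin that by (intro member_le_sum) auto
  define p where "p = (\<Sum>d\<in>D. monom (a d) (nat (n d + N)))"
  have "coeff p (nat (n d0 + N)) = (\<Sum>d\<in>D. if d = d0 then a d0 else 0)"
    unfolding p_def coeff_sum coeff_monom
  proof (intro sum.cong refl)
    fix d assume d: "d \<in> D"
    have "nat (n d + N) = nat (n d0 + N) \<longleftrightarrow> d = d0"
      using Nge[OF d] Nge[OF d0(1)] inj d d0(1) by (auto simp: inj_on_def)
    then show "(if nat (n d + N) = nat (n d0 + N) then a d else 0) = (if d = d0 then a d0 else 0)"
      by auto
  qed
  also have "\<dots> = a d0" using fin d0 by simp
  finally have "p \<noteq> 0" using d0 by auto
  hence fin2: "finite {w. poly p w = 0}" by (rule poly_roots_finite)
  have "poly p w = w ^ nat N * (\<Sum>d\<in>D. a d * w powi n d)" if "w \<noteq> 0" for w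
  proof -
    have "poly p w = (\<Sum>d\<in>D. a d * w ^ nat (n d + N))"
      unfolding p_def poly_sum poly_monom by simp
    also have "\<dots> = (\<Sum>d\<in>D. w ^ nat N * (a d * w powi n d))"
    proof (intro sum.cong refl)
      fix d assume d: "d \<in> D"
      have N0: "N \<ge> 0" using Nge[OF d] by simp
      have "w ^ nat (n d + N) = w powi (n d + N)"
        using Nge[OF d] by (simp add: power_int_def)
      also have "\<dots> = w powi n d * w powi N" using that by (simp add: power_int_add)
      also have "w powi N = w ^ nat N" using N0 by (simp add: power_int_def)
      finally show "a d * w ^ nat (n d + N) = w ^ nat N * (a d * w powi n d)" by simp
    qed
    also have "\<dots> = w ^ nat N * (\<Sum>d\<in>D. a d * w powi n d)" by (simp add: sum_distrib_left)
    finally show ?thesis .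
  qed
  then have "{w. w \<noteq> 0 \<and> (\<Sum>d\<in>D. a d * w powi n d) = 0} \<subseteq> {w. poly p w = 0}" by auto
  thus ?thesis using fin2 finite_subset by blast
qed

lemma cis_2pi_inj: "inj_on (\<lambda>s::real. cis (2 * pi * s)) {0..<1}"
proof (rule inj_onI)
  fix a b :: real assume a: "a \<in> {0..<1}" and b: "b \<in> {0..<1}" and e: "cis (2 * pi * a) = cis (2 * pi * b)"
  from e have "exp (\<i> * complex_of_real (2 * pi * a)) = exp (\<i> * complex_of_real (2 * pi * b))"
    by (simp add: cis_conv_exp)
  then obtain m :: int where m: "\<i> * complex_of_real (2 * pi * a) = \<i> * complex_of_real (2 * pi * b) + complex_of_real (real_of_int (2 * m) * pi) * \<i>"
    unfolding exp_eq by blast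
  then have "Im (\<i> * complex_of_real (2 * pi * a)) = Im (\<i> * complex_of_real (2 * pi * b) + complex_of_real (real_of_int (2 * m) * pi) * \<i>)"
    by simp
  then have "2 * pi * a = 2 * pi * b + 2 * m * pi" by simp
  then have "(2*pi) * a = (2*pi) * (b + m)" by (simp add: algebra_simps)
  then have "a = b + m" using pi_gt_zero by (metis mult_left_cancel mult_eq_0_iff pi_neq_zero zero_neq_numeral)
  moreover have "m = 0"
  proof -
    have "\<bar>real_of_int m\<bar> < 1" using a b \<open>a = b + m\<close> by auto
    thus ?thesis by linarith
  qed
  ultimately show "a = b" by simp
qed

lemma prod_cis: "finite A \<Longrightarrow> (\<Prod>j\<in>A. cis (f j)) = cis (\<Sum>j\<in>A. f j)"
  by (induction A rule: finite_induct) (auto simp: cis_mult)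

lemma exists_sep:
  fixes D :: "(int^'m) set"
  assumes "finite D"
  shows "\<exists>k::int^'m. inj_on (\<lambda>d. \<Sum>j\<in>UNIV. k$j * d$j) D"
proof -
  define \<sigma> where "\<sigma> = to_nat_on (UNIV :: 'm set)"
  have inj\<sigma>: "inj \<sigma>" unfolding \<sigma>_def by (rule inj_on_to_nat_on) simp
  define q where "q v = (\<Sum>j\<in>UNIV. monom (v$j) (\<sigma> j))" for v :: "int^'m"
  have qnz: "q v \<noteq> 0" if v0: "v \<noteq> 0" for v
  proof -
    obtain i where i: "v$i \<noteq> 0" using v0 by (auto simp: vec_eq_iff)
    have "coeff (q v) (\<sigma> i) = (\<Sum>j\<in>UNIV. if j = i then v$i else 0)"
      unfolding q_def coeff_sum coeff_monom using inj\<sigma> by (intro sum.cong refl) (auto simp: inj_def)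
    also have "\<dots> = v$i" by simp
    finally show ?thesis using i by auto
  qed
  have polyq: "poly (q v) x = (\<Sum>j\<in>UNIV. v$j * x ^ \<sigma> j)" for v x
    unfolding q_def poly_sum poly_monom by simp
  define R where "R = (\<Union>v\<in>{d - d' |d d'. d \<in> D \<and> d' \<in> D \<and> d \<noteq> d'}. {x. poly (q v) x = 0})"
  have "finite {d - d' |d d'. d \<in> D \<and> d' \<in> D \<and> d \<noteq> d'}"
  proof -
    have "{d - d' |d d'. d \<in> D \<and> d' \<in> D \<and> d \<noteq> d'} \<subseteq> (\<lambda>(d,d'). d - d') ` (D \<times> D)" by auto
    thus ?thesis by (rule finite_subset) (use assms in simp)
  qed
  moreover have "finite {x. poly (q v) x = 0}" if "v \<in> {d - d' |d d'. d \<in> D \<and> d' \<in> D \<and> d \<noteq> d'}" for v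
    using that qnz by (intro poly_roots_finite) auto
  ultimately have "finite R" unfolding R_def by (rule finite_UN_I)
  then obtain N :: int where N: "N \<notin> R" using ex_new_if_finite[OF infinite_UNIV_int] by blast
  define k :: "int^'m" where "k = (\<chi> j. N ^ \<sigma> j)"
  have "inj_on (\<lambda>d. \<Sum>j\<in>UNIV. k$j * d$j) D"
  proof (rule inj_onI, rule ccontr)
    fix d d' assume d: "d \<in> D" "d' \<in> D" and e: "(\<Sum>j\<in>UNIV. k$j * d$j) = (\<Sum>j\<in>UNIV. k$j * d'$j)" and ne: "d \<noteq> d'"
    have "poly (q (d - d')) N = (\<Sum>j\<in>UNIV. k$j * d$j) - (\<Sum>j\<in>UNIV. k$j * d'$j)"
      unfolding polyq k_def by (simp add: sum_subtractf[symmetric] algebra_simps)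
    also have "\<dots> = 0" using e by simp
    finally have z: "poly (q (d - d')) N = 0" .
    have "d - d' \<in> {d - d' |d d'. d \<in> D \<and> d' \<in> D \<and> d \<noteq> d'}" using d ne by blast
    hence "N \<in> R" using z unfolding R_def by blast
    thus False using N by contradiction
  qed
  thus ?thesis by blast
qed


definition ip :: "int^'m \<Rightarrow> real^'m \<Rightarrow> real" where
  "ip d t = (\<Sum>j\<in>UNIV. real_of_int (d$j) * t$j)"

definition HH :: "(int^'m) set \<Rightarrow> (int^'m \<Rightarrow> complex) \<Rightarrow> real^'m \<Rightarrow> complex" where
  "HH D c t = (\<Sum>d\<in>D. c d * cis (2 * pi * ip d t))"

lemma HH_cont: "continuous_on UNIV (HH D c)"
  unfolding HH_def ip_def by (intro continuous_intros)

lemma HH_meas[measurable]: "HH D c \<in> borel_measurable borel"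
  by (rule borel_measurable_continuous_onI[OF HH_cont])

lemma lborel_transl:
  fixes Z :: "'a::euclidean_space set"
  assumes "Z \<in> sets borel"
  shows "emeasure lborel ((\<lambda>t. a + t) -` Z) = emeasure lborel Z"
proof -
  have "emeasure (distr lborel borel ((+) a)) Z = emeasure lborel ((+) a -` Z \<inter> space lborel)"
    using assms by (intro emeasure_distr) auto
  thus ?thesis by (simp add: lborel_distr_plus)
qed

lemma HH_null:
  fixes D :: "(int^'m) set"
  assumes fin: "finite D" and d0: "d0 \<in> D" "c d0 \<noteq> 0"
  shows "emeasure lborel {t. HH D c t = 0} = 0"
proof -
  obtain k :: "int^'m" where inj: "inj_on (\<lambda>d. \<Sum>j\<in>UNIV. k$j * d$j) D"
    using exists_sep[OF fin] by blast
  define n where "n d = (\<Sum>j\<in>UNIV. k$j * d$j)" for d :: "int^'m"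
  define kr :: "real^'m" where "kr = (\<chi> j. real_of_int (k$j))"
  have ipshift: "ip d (t + s *\<^sub>R kr) = ip d t + s * real_of_int (n d)" for d t s
    unfolding ip_def n_def kr_def
    by (simp add: algebra_simps sum.distrib sum_distrib_left)
  have Hshift: "HH D c (t + s *\<^sub>R kr) = (\<Sum>d\<in>D. (c d * cis (2 * pi * ip d t)) * cis (2 * pi * s) powi n d)" for t s
    unfolding HH_def
  proof (intro sum.cong refl)
    fix d assume "d \<in> D"
    have "cis (2 * pi * ip d (t + s *\<^sub>R kr)) = cis (2 * pi * ip d t) * cis (real_of_int (n d) * (2 * pi * s))"
      unfolding ipshift cis_mult by (simp add: algebra_simps)
    thus "c d * cis (2 * pi * ip d (t + s *\<^sub>R kr)) = c d * cis (2 * pi * ip d t) * cis (2 * pi * s) powi n d"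
      by (simp add: cis_power_int)
  qed
  define Z where "Z = {t. HH D c t = 0}"
  have Zb: "Z \<in> sets borel" unfolding Z_def by measurable
  define W where "W = {p :: real \<times> (real^'m). fst p \<in> {0..<1} \<and> HH D c (snd p + fst p *\<^sub>R kr) = 0}"
  have gc: "continuous_on UNIV (\<lambda>p::real \<times> (real^'m). HH D c (snd p + fst p *\<^sub>R kr))"
  proof -
    have "continuous_on UNIV (\<lambda>p::real \<times> (real^'m). snd p + fst p *\<^sub>R kr)"
      by (intro continuous_intros)
    moreover have "continuous_on (range (\<lambda>p::real \<times> (real^'m). snd p + fst p *\<^sub>R kr)) (HH D c)"
      using HH_cont continuous_on_subset by blast
    ultimately show ?thesis using continuous_on_compose[of UNIV "\<lambda>p::real \<times> (real^'m). snd p + fst p *\<^sub>R kr" "HH D c"]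
      by (simp add: o_def)
  qed
  have gm[measurable]: "(\<lambda>p::real \<times> (real^'m). HH D c (snd p + fst p *\<^sub>R kr)) \<in> borel_measurable borel"
    by (rule borel_measurable_continuous_onI[OF gc])
  have fm[measurable]: "(fst :: real \<times> (real^'m) \<Rightarrow> real) \<in> borel_measurable borel"
    by (rule borel_measurable_continuous_onI) (intro continuous_intros)
  have "W = {p \<in> space borel. fst p \<in> {0..<1} \<and> HH D c (snd p + fst p *\<^sub>R kr) = 0}"
    unfolding W_def by simp
  also have "\<dots> \<in> sets borel" by measurable
  finally have Wb: "W \<in> sets (lborel \<Otimes>\<^sub>M lborel)"
    unfolding lborel_prod by simp
  have "emeasure (lborel \<Otimes>\<^sub>M lborel) W = (\<integral>\<^sup>+ s. emeasure lborel (Pair s -` W) \<partial>lborel)"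
    by (rule lborel.emeasure_pair_measure_alt[OF Wb])
  also have "\<dots> = (\<integral>\<^sup>+ s. emeasure lborel Z * indicator {0..<1::real} s \<partial>lborel)"
  proof -
    have pt: "emeasure lborel (Pair s -` W) = emeasure lborel Z * indicator {0..<1} s" for s :: real
    proof (cases "s \<in> {0..<1}")
      case True
      have "Pair s -` W = (\<lambda>t. s *\<^sub>R kr + t) -` Z" using True
        by (auto simp: W_def Z_def add.commute)
      then show ?thesis using True lborel_transl[OF Zb] by simp
    next
      case False
      have "Pair s -` W = {}" using False by (auto simp: W_def)
      then show ?thesis using False by simp
    qed
    show ?thesis by (simp only: pt)
  qed
  also have "\<dots> = emeasure lborel Z"
    using nn_integral_cmult_indicator[of "{0..<1::real}" lborel "emeasure lborel Z"] by simp
  finally have eq1: "emeasure (lborel \<Otimes>\<^sub>M lborel) W = emeasure lborel Z" .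
  have "emeasure (lborel \<Otimes>\<^sub>M lborel) W = (\<integral>\<^sup>+ t. emeasure lborel ((\<lambda>s. (s, t)) -` W) \<partial>lborel)"
    by (rule lborel_pair.emeasure_pair_measure_alt2[OF Wb])
  also have "\<dots> = (\<integral>\<^sup>+ t. 0 \<partial>(lborel :: (real^'m) measure))"
  proof (intro nn_integral_cong)
    fix t :: "real^'m"
    define a where "a d = c d * cis (2 * pi * ip d t)" for d
    define R where "R = {w. w \<noteq> 0 \<and> (\<Sum>d\<in>D. a d * w powi n d) = 0}"
    have "finite R" unfolding R_def
      by (rule exp_poly_roots_finite[OF fin _ d0(1)]) (use inj d0 in \<open>auto simp: n_def a_def\<close>)
    hence "finite ((\<lambda>s::real. cis (2 * pi * s)) -` R \<inter> {0..<1})"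
      by (rule finite_vimage_IntI) (rule cis_2pi_inj)
    moreover have "(\<lambda>s. (s, t)) -` W \<subseteq> (\<lambda>s::real. cis (2 * pi * s)) -` R \<inter> {0..<1}"
      by (auto simp: W_def R_def Hshift a_def)
    ultimately have "countable ((\<lambda>s. (s, t)) -` W)"
      by (meson countable_finite finite_subset)
    thus "emeasure lborel ((\<lambda>s. (s, t)) -` W) = 0" by (rule emeasure_lborel_countable)
  qed
  also have "\<dots> = 0" by simp
  finally show ?thesis using eq1 unfolding Z_def by simp
qed


lemma comp_meas[measurable]: "(\<lambda>z::complex^'m. z $ j) \<in> borel_measurable borel"
  by (rule borel_measurable_continuous_onI) (intro continuous_intros)

lemma powi_meas[measurable]: "(\<lambda>z::complex^'m. (z $ j) powi n) \<in> borel_measurable borel"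
proof (cases "n \<ge> 0")
  case True
  then show ?thesis unfolding power_int_def by simp
next
  case False
  then show ?thesis unfolding power_int_def by simp
qed

lemma laurent_meas[measurable]: "laurent_eval D c \<in> borel_measurable borel"
  unfolding laurent_eval_def by measurable

lemma phi_meas[measurable]: "(\<lambda>t::real^'m. \<chi> j. cis (2 * pi * t$j)) \<in> borel_measurable borel"
  by (rule borel_measurable_continuous_onI) (intro continuous_on_vec_lambda continuous_intros)

lemma laurent_HH:
  fixes D :: "(int^'m) set" and t :: "real^'m"
  shows "laurent_eval D c (\<chi> i. cis (2 * pi * t$i)) = HH D c t"
  unfolding laurent_eval_def HH_def
proof (intro sum.cong refl)
  fix d :: "int^'m"
  have "(\<Prod>j\<in>UNIV. (\<chi> i. cis (2 * pi * t$i)) $ j powi d $ j) = (\<Prod>j\<in>UNIV. cis (real_of_int (d$j) * (2 * pi * t$j)))"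
    by (simp add: cis_power_int)
  also have "\<dots> = cis (2 * pi * ip d t)"
    by (simp add: prod_cis ip_def sum_distrib_left algebra_simps)
  finally show "c d * (\<Prod>j\<in>UNIV. (\<chi> i. cis (2 * pi * t$i)) $ j powi d $ j) = c d * cis (2 * pi * ip d t)"
    by simp
qed

lemma HH_real:
  assumes "c \<in> F_D D" "uminus ` D = D"
  shows "Im (HH D c t) = 0"
proof -
  have "cnj (HH D c t) = (\<Sum>d\<in>D. c (- d) * cis (2 * pi * ip (- d) t))"
    unfolding HH_def cnj_sum
  proof (intro sum.cong refl)
    fix d assume "d \<in> D"
    then have "cnj (c d) = c (- d)" using assms(1) by (simp add: F_D_def)
    moreover have "ip (- d) t = - ip d t" by (simp add: ip_def sum_negf)
    ultimately show "cnj (c d * cis (2 * pi * ip d t)) = c (- d) * cis (2 * pi * ip (- d) t)"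
      by (simp add: cis_cnj)
  qed
  also have "\<dots> = (\<Sum>d\<in>uminus ` D. c d * cis (2 * pi * ip d t))"
    by (subst sum.reindex) (auto simp: inj_on_def)
  also have "\<dots> = HH D c t" using assms(2) by (simp add: HH_def)
  finally have "cnj (HH D c t) = HH D c t" .
  then have "Im (cnj (HH D c t)) = Im (HH D c t)" by simp
  then show ?thesis by simp
qed

lemma HH_diff:
  assumes "finite D"
  shows "cmod (HH D c t - HH D c' t) \<le> (\<Sum>d\<in>D. cmod (c' d - c d))"
proof -
  have "HH D c t - HH D c' t = (\<Sum>d\<in>D. (c d - c' d) * cis (2 * pi * ip d t))"
    unfolding HH_def by (simp add: sum_subtractf[symmetric] algebra_simps)
  also have "cmod \<dots> \<le> (\<Sum>d\<in>D. cmod ((c d - c' d) * cis (2 * pi * ip d t)))"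
    by (rule norm_sum)
  also have "\<dots> = (\<Sum>d\<in>D. cmod (c' d - c d))"
    by (simp add: norm_mult norm_minus_commute)
  finally show ?thesis .
qed


lemma rho_neg_eq:
  fixes D :: "(int^'m) set"
  shows "rho_neg D c = measure (restrict_space lborel {t::real^'m. \<forall>j. t$j \<in> {0..1}})
            ({t::real^'m. \<forall>j. t$j \<in> {0..1}} \<inter> {t. Re (HH D c t) < 0})"
proof -
  let ?\<Omega> = "{t::real^'m. \<forall>j. t$j \<in> {0..1}}"
  let ?M = "restrict_space lborel ?\<Omega>"
  let ?phi = "\<lambda>t::real^'m. \<chi> i. cis (2 * pi * t$i)"
  have m: "?phi \<in> measurable ?M borel"
    by (rule measurable_restrict_space1) simp
  have A: "{z. Re (laurent_eval D c z) < 0} \<in> sets borel" by measurable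
  have "rho_neg D c = measure (distr ?M borel ?phi) {z. Re (laurent_eval D c z) < 0}"
    unfolding rho_neg_def torus_measure_def by simp
  also have "\<dots> = measure ?M (?phi -` {z. Re (laurent_eval D c z) < 0} \<inter> space ?M)"
    by (rule measure_distr[OF m A])
  also have "?phi -` {z. Re (laurent_eval D c z) < 0} \<inter> space ?M = ?\<Omega> \<inter> {t. Re (HH D c t) < 0}"
    by (auto simp: laurent_HH space_restrict_space)
  finally show ?thesis .
qed

theorem lemma2:
  fixes D :: "(int^'m) set"
  assumes "finite D" and "0 \<notin> D" and "uminus ` D = D"
  shows "continuous_on (F_D D) (rho_neg D)"
proof -
  define \<Omega> where "\<Omega> = {t::real^'m. \<forall>j. t$j \<in> {0..1}}"
  define M where "M = restrict_space lborel \<Omega>"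
  have \<Omega>cbox: "\<Omega> = cbox 0 1" unfolding \<Omega>_def by (auto simp: mem_box_cart)
  have \<Omega>s: "\<Omega> \<in> sets lborel" unfolding \<Omega>cbox by simp
  have spM: "space M = \<Omega>" unfolding M_def by (simp add: space_restrict_space)
  have setsM: "\<Omega> \<inter> A \<in> sets M" if "A \<in> sets borel" for A
    unfolding M_def using \<Omega>s that by (subst sets_restrict_space_iff) auto
  have emM: "emeasure M A = emeasure lborel A" if "A \<subseteq> \<Omega>" for A
    unfolding M_def using \<Omega>s that by (intro emeasure_restrict_space) auto
  have msM: "measure M A = measure lborel A" if "A \<subseteq> \<Omega>" for A
    unfolding M_def using \<Omega>s that by (intro measure_restrict_space) auto
  interpret finite_measure M
  proof
    have "emeasure M (space M) = emeasure lborel (cbox (0::real^'m) 1)"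
      using emM[OF order.refl] spM \<Omega>cbox by simp
    then show "emeasure M (space M) \<noteq> \<infinity>"
      using emeasure_lborel_cbox_finite[of "0::real^'m" 1] by simp
  qed
  have rho: "rho_neg D c = measure M (\<Omega> \<inter> {t. Re (HH D c t) < 0})" for c
    unfolding rho_neg_eq M_def \<Omega>_def ..
  show ?thesis
    unfolding continuous_on_def
  proof
    fix c assume cF: "c \<in> F_D D"
    obtain d0 where d0: "d0 \<in> D" "c d0 \<noteq> 0"
    proof (rule ccontr)
      assume "\<not> thesis"
      with that have "\<forall>d\<in>D. c d = 0" by blast
      then have "(\<Sum>d\<in>D. (cmod (c d))^2) = 0" by simp
      with cF show False by (simp add: F_D_def)
    qed
    define N where "N n = \<Omega> \<inter> {t. \<bar>Re (HH D c t)\<bar> < 1 / Suc n}" for n :: nat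
    have Ns: "N n \<in> sets M" for n unfolding N_def by (intro setsM) measurable
    have Ndec: "antimono_on UNIV N"
    proof (rule antimonoI)
      fix m n :: nat assume "m \<le> n"
      then have "1 / real (Suc n) \<le> 1 / Suc m" by (simp add: frac_le)
      then show "N n \<le> N m" unfolding N_def by auto
    qed
    have Isub: "\<Inter> (range N) \<subseteq> {t. HH D c t = 0}"
    proof
      fix t assume t: "t \<in> \<Inter> (range N)"
      have lt: "\<bar>Re (HH D c t)\<bar> < 1 / Suc n" for n using t unfolding N_def by auto
      have "Re (HH D c t) = 0"
      proof (rule ccontr)
        assume "Re (HH D c t) \<noteq> 0"
        then have "\<bar>Re (HH D c t)\<bar> > 0" by simp
        then obtain n where "1 / real (Suc n) < \<bar>Re (HH D c t)\<bar>" by (rule nat_approx_posE)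
        with lt[of n] show False by simp
      qed
      moreover have "Im (HH D c t) = 0" by (rule HH_real[OF cF assms(3)])
      ultimately show "t \<in> {t. HH D c t = 0}" by (simp add: complex_eq_iff)
    qed
    have Zs: "{t. HH D c t = 0} \<in> sets lborel" by measurable
    have em0: "emeasure lborel (\<Inter> (range N)) = 0"
      by (rule emeasure_eq_0[OF Zs HH_null[of D d0 c, OF assms(1) d0] Isub])
    have "\<Inter> (range N) \<subseteq> \<Omega>" unfolding N_def by auto
    then have "measure M (\<Inter> (range N)) = measure lborel (\<Inter> (range N))" by (rule msM)
    also have "\<dots> = 0" using em0 by (simp add: measure_def)
    finally have "measure M (\<Inter> (range N)) = 0" .
    then have lim: "(\<lambda>n. measure M (N n)) \<longlonglongrightarrow> 0"
      using finite_Lim_measure_decseq[of N] Ns Ndec by auto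
    show "(rho_neg D \<longlongrightarrow> rho_neg D c) (at c within F_D D)"
    proof (rule tendstoI)
      fix e :: real assume e: "e > 0"
      obtain n where n: "measure M (N n) < e"
        using order_tendstoD(2)[OF lim e] by (meson eventually_sequentially order.refl)
      define \<delta> :: real where "\<delta> = 1 / Suc n"
      have \<delta>: "\<delta> > 0" unfolding \<delta>_def by simp
      have tc: "((\<lambda>c'. c' d) \<longlongrightarrow> c d) (at c within F_D D)" for d
      proof -
        have "((\<lambda>c'. c' d) \<longlongrightarrow> c d) (at c within UNIV)"
          using continuous_on_product_coordinates[of d] unfolding continuous_on_def by blast
        thus ?thesis by (rule tendsto_within_subset) simp
      qed
      have "((\<lambda>c'. \<Sum>d\<in>D. cmod (c' d - c d)) \<longlongrightarrow> (\<Sum>d\<in>D. cmod (c d - c d))) (at c within F_D D)"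
        by (intro tendsto_intros tc)
      then have "((\<lambda>c'. \<Sum>d\<in>D. cmod (c' d - c d)) \<longlongrightarrow> 0) (at c within F_D D)" by simp
      then have ev: "\<forall>\<^sub>F c' in at c within F_D D. (\<Sum>d\<in>D. cmod (c' d - c d)) < \<delta>"
        using order_tendstoD(2)[OF _ \<delta>] by blast
      show "\<forall>\<^sub>F c' in at c within F_D D. dist (rho_neg D c') (rho_neg D c) < e"
      proof (rule eventually_mono[OF ev])
        fix c' assume small: "(\<Sum>d\<in>D. cmod (c' d - c d)) < \<delta>"
        have close: "\<bar>Re (HH D c t) - Re (HH D c' t)\<bar> < \<delta>" for t
        proof -
          have "\<bar>Re (HH D c t) - Re (HH D c' t)\<bar> \<le> cmod (HH D c t - HH D c' t)"
            using abs_Re_le_cmod[of "HH D c t - HH D c' t"] by simp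
          also have "\<dots> \<le> (\<Sum>d\<in>D. cmod (c' d - c d))" by (rule HH_diff[OF assms(1)])
          finally show ?thesis using small by simp
        qed
        define A where "A = \<Omega> \<inter> {t. Re (HH D c t) < 0}"
        define A' where "A' = \<Omega> \<inter> {t. Re (HH D c' t) < 0}"
        have As: "A \<in> sets M" unfolding A_def by (intro setsM) measurable
        have A's: "A' \<in> sets M" unfolding A'_def by (intro setsM) measurable
        have sub1: "A' \<subseteq> A \<union> N n"
        proof
          fix t assume "t \<in> A'"
          then show "t \<in> A \<union> N n" using close[of t] unfolding A_def A'_def N_def \<delta>_def by auto
        qed
        have sub2: "A \<subseteq> A' \<union> N n"
        proof
          fix t assume "t \<in> A"
          then show "t \<in> A' \<union> N n" using close[of t] unfolding A_def A'_def N_def \<delta>_def by auto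
        qed
        have "measure M A' \<le> measure M (A \<union> N n)" using sub1 As Ns by (intro finite_measure_mono) auto
        also have "\<dots> \<le> measure M A + measure M (N n)" using As Ns by (intro measure_Un_le) auto
        finally have 1: "measure M A' \<le> measure M A + measure M (N n)" .
        have "measure M A \<le> measure M (A' \<union> N n)" using sub2 A's Ns by (intro finite_measure_mono) auto
        also have "\<dots> \<le> measure M A' + measure M (N n)" using A's Ns by (intro measure_Un_le) auto
        finally have 2: "measure M A \<le> measure M A' + measure M (N n)" .
        have "dist (rho_neg D c') (rho_neg D c) = \<bar>measure M A' - measure M A\<bar>"
          unfolding rho A_def A'_def dist_real_def ..
        also have "\<dots> < e" using 1 2 n by linarith
        finally show "dist (rho_neg D c') (rho_neg D c) < e" .
      qed
    qed
  qed
qed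

end
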